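(* Under either the overlap preference model or the cost preference model, for no $k\in\mathbb{N}$ is the pair $\langle R,F\rangle$ U-FSSP-A, where $R$ is the $k$-equal-representation shortlisting rule and $F$ is either the greedy-approval rule or the approval-maximising rule.
   Context: Throughout, $\mathbb{N}=\{1,2,3,\dots\}$. Let $\mathbb{P}=\{p_1,\dots,p_m\}$ be a finite set of projects, $c:\mathbb{P}\to\mathbb{N}$ a cost function with $c(P)=\sum_{p\in P}c(p)$, $B\in\mathbb{N}$ a budget with $c(p)\le B$ for all $p$; agents $\mathcal{N}=\{1,\dots,n\}$. Tie-breaking: for nonempty $P\subseteq\mathbb{P}$, $T(P)$ is its lowest-index project; for a nonempty family $\mathfrak{P}$ of subsets of $\mathbb{P}$, $T(\mathfrak{P})$ is the unique $P\in\mathfrak{P}$ such that for all $P'\in\mathfrak{P}\setminus\{P\}$ the lowest-index project of $(P\setminus P')\cup(P'\setminus P)$ lies in $P$; for a weak order $\ge$ on $\mathbb{P}$, $T(\ge)$ is the strict order obtained by ordering each indifference class by increasing index. Greedy selection $\mathit{GREED}(P,\gg)$, for $P\subseteq\mathbb{P}$ and a strict linear order $\gg$ on $P$, examines projects in the order $\gg$ and selects a project iff doing so keeps the total cost of selected projects at most $B$. Shortlisting stage: shortlisting instance $I=\langle\mathbb{P},c,B\rangle$; shortlisting profile $\boldsymbol{P}=(P_1,\dots,P_n)$, $P_i\subseteq\mathbb{P}$, $\bigcup\boldsymbol{P}=P_1\cup\dots\cup P_n$; $(\boldsymbol{P}_{-i},P_i')$ replaces $P_i$ by $P_i'$. The $k$-equal-representation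 shortlisting rule returns $R(I,\boldsymbol{P})=T\big(\operatorname*{argmax}_{P\subseteq\bigcup\boldsymbol{P},\ c(P)\le kB}\sum_{i\in\mathcal{N}}\sum_{\ell=0}^{|P_i\cap P|}n^{-\ell}\big)$. Each agent $i$ has an awareness set $C_i\subseteq\mathbb{P}$; $\boldsymbol{C}=(C_1,\dots,C_n)$. Allocation stage: allocation instance $I=\langle\mathcal{P},c,B\rangle$, $\mathcal{P}\subseteq\mathbb{P}$; profile $\boldsymbol{A}=(A_1,\dots,A_n)$, $A_i\subseteq\mathcal{P}$; $n_p^{\boldsymbol{A}}=|\{i:p\in A_i\}|$; $p\ge_{\mathit{app}}^{\boldsymbol{A}}p'$ iff $n_p^{\boldsymbol{A}}\ge n_{p'}^{\boldsymbol{A}}$; $\mathcal{A}(I)$ is the set of $A\subseteq\mathcal{P}$ with $c(A)\le B$. Greedy-approval rule: $F(I,\boldsymbol{A})=\mathit{GREED}(\mathcal{P},T(\ge_{\mathit{app}}^{\boldsymbol{A}}))$. Approval-maximising rule: $F(I,\boldsymbol{A})=T(\operatorname*{argmax}_{A\in\mathcal{A}(I)}\sum_{p\in A}n_p^{\boldsymbol{A}})$. Preferences: each agent $i$ has a strict linear order $\rhd_i$ on $\mathbb{P}$; $\mathit{top}_i(\mathcal{P})=\mathit{GREED}(\mathcal{P},\rhd_i|_{\mathcal{P}})$, $\boldsymbol{top}(\mathcal{P})=(\mathit{top}_1(\mathcal{P}),\dots,\mathit{top}_n(\mathcal{P}))$. For $P\subseteq\mathbb{P}$: overlap model $A\succeq_P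 A'$ iff $|A\cap P|\ge|A'\cap P|$; cost model $A\succeq_P A'$ iff $c(A\cap P)\ge c(A'\cap P)$; $\succ_P$ its strict part. $\mathit{best}(\succ,\mathfrak{P})$ is the set of elements of $\mathfrak{P}$ undominated w.r.t. $\succ$. Best response: for $I=\langle\mathcal{P},c,B\rangle$, profile $\boldsymbol{A}$, agent $i$: $A_i^\star(I,\boldsymbol{A})=T(\mathit{best}(\succ_{\mathit{top}_i(\mathcal{P})},\{F(I,(\boldsymbol{A}_{-i},A_i'))\mid A_i'\subseteq\mathcal{P}\}))$ and $F^\star(I,\boldsymbol{A})=F(I,(\boldsymbol{A}_{-i},A_i^\star(I,\boldsymbol{A})))$. Anticipative manipulation: given $R,F$, shortlisting instance $I_1$, profile $\boldsymbol{P}$, agent $i$, $P_i'\subseteq\mathbb{P}$, let $\mathcal{P}=R(I_1,\boldsymbol{P})$, $\mathcal{P}'=R(I_1,(\boldsymbol{P}_{-i},P_i'))$, $I_2=\langle\mathcal{P},c,B\rangle$, $I_2'=\langle\mathcal{P}',c,B\rangle$, $Q=\mathit{top}_i(\mathcal{P}\cup\mathcal{P}')$. $P_i'$ is a successful anticipative manipulation if $F^\star(I_2',\boldsymbol{top}(\mathcal{P}'))\succ_Q F^\star(I_2,\boldsymbol{top}(\mathcal{P}))$. U-FSSP-A: for a preference model, $\langle R,F\rangle$ is U-FSSP-A if for every shortlisting instance, awareness profile $\boldsymbol{C}$, shortlisting profile $\boldsymbol{P}$ with $P_{i'}\subseteq C_{i'}$ for all $i'$, and agent $i$, there is no $P_i'\subseteq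 C_i\cup\bigcup\boldsymbol{P}$ such that submitting $P_i'$ instead of $\mathit{top}_i(C_i\cup\bigcup\boldsymbol{P})$ (i.e., going from $(\boldsymbol{P}_{-i},\mathit{top}_i(C_i\cup\bigcup\boldsymbol{P}))$ to $(\boldsymbol{P}_{-i},P_i')$) is a successful anticipative manipulation for $i$. *)

theory Defs
  imports Complex_Main "HOL-Library.Product_Lexorder"
begin

(* Projects p_1..p_m are represented by their indices 1..m (so "lowest index" = Min);
   agents are 1..n. Profiles are functions from agents to sets of projects. *)

definition tie_fam :: "nat set set \<Rightarrow> nat set" where
  "tie_fam Fam = (THE P. P \<in> Fam \<and>
      (\<forall>P'\<in>Fam. P' \<noteq> P \<longrightarrow> Min ((P - P') \<union> (P' - P)) \<in> P))"

fun greed_aux :: "(nat \<Rightarrow> nat) \<Rightarrow> nat \<Rightarrow> nat list \<Rightarrow> nat set \<Rightarrow> nat set" where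
  "greed_aux c B [] S = S"
| "greed_aux c B (x # xs) S =
     greed_aux c B xs (if sum c (insert x S) \<le> B then insert x S else S)"

definition greed :: "(nat \<Rightarrow> nat) \<Rightarrow> nat \<Rightarrow> nat list \<Rightarrow> nat set" where
  "greed c B xs = greed_aux c B xs {}"

definition eqrep_score :: "nat \<Rightarrow> (nat \<Rightarrow> nat set) \<Rightarrow> nat set \<Rightarrow> real" where
  "eqrep_score n Ps P = (\<Sum>i\<in>{1..n}. \<Sum>l\<in>{0..card (Ps i \<inter> P)}. (1 / real n) ^ l)"

definition shortlist_R :: "nat \<Rightarrow> nat \<Rightarrow> (nat \<Rightarrow> nat) \<Rightarrow> nat \<Rightarrow> (nat \<Rightarrow> nat set) \<Rightarrow> nat set" where
  "shortlist_R k n c B Ps =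
    (let U = (\<Union>i\<in>{1..n}. Ps i);
         feas = {P. P \<subseteq> U \<and> sum c P \<le> k * B}
     in tie_fam {P \<in> feas. \<forall>P'\<in>feas. eqrep_score n Ps P' \<le> eqrep_score n Ps P})"

definition napp :: "nat \<Rightarrow> (nat \<Rightarrow> nat set) \<Rightarrow> nat \<Rightarrow> nat" where
  "napp n A p = card {i \<in> {1..n}. p \<in> A i}"

(* T(>=_app): decreasing approval count, ties by increasing index *)
definition greedy_approval :: "nat \<Rightarrow> (nat \<Rightarrow> nat) \<Rightarrow> nat \<Rightarrow> nat set \<Rightarrow> (nat \<Rightarrow> nat set) \<Rightarrow> nat set" where
  "greedy_approval n c B Pc A =
     greed c B (sort_key (\<lambda>p. (- int (napp n A p), p)) (sorted_list_of_set Pc))"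

definition approval_max :: "nat \<Rightarrow> (nat \<Rightarrow> nat) \<Rightarrow> nat \<Rightarrow> nat set \<Rightarrow> (nat \<Rightarrow> nat set) \<Rightarrow> nat set" where
  "approval_max n c B Pc A =
     (let feas = {X. X \<subseteq> Pc \<and> sum c X \<le> B}
      in tie_fam {X \<in> feas. \<forall>Y\<in>feas. (\<Sum>p\<in>Y. napp n A p) \<le> (\<Sum>p\<in>X. napp n A p)})"

text \<open>Preferences: agent j's strict linear order is the list pref j (most preferred first).\<close>
definition top :: "(nat \<Rightarrow> nat) \<Rightarrow> nat \<Rightarrow> (nat \<Rightarrow> nat list) \<Rightarrow> nat \<Rightarrow> nat set \<Rightarrow> nat set" where
  "top c B pref j Pc = greed c B (filter (\<lambda>p. p \<in> Pc) (pref j))"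

datatype pmodel = Overlap | CostModel

(* spref M c Q X Y  means  X \<succ>_Q Y *)
definition spref :: "pmodel \<Rightarrow> (nat \<Rightarrow> nat) \<Rightarrow> nat set \<Rightarrow> nat set \<Rightarrow> nat set \<Rightarrow> bool" where
  "spref M c Q X Y = (case M of
      Overlap \<Rightarrow> card (Y \<inter> Q) < card (X \<inter> Q)
    | CostModel \<Rightarrow> sum c (Y \<inter> Q) < sum c (X \<inter> Q))"

definition best :: "pmodel \<Rightarrow> (nat \<Rightarrow> nat) \<Rightarrow> nat set \<Rightarrow> nat set set \<Rightarrow> nat set set" where
  "best M c Q Fam = {X \<in> Fam. \<not> (\<exists>Y\<in>Fam. spref M c Q Y X)}"

type_synonym alloc_rule =
  "nat \<Rightarrow> (nat \<Rightarrow> nat) \<Rightarrow> nat \<Rightarrow> nat set \<Rightarrow> (nat \<Rightarrow> nat set) \<Rightarrow> nat set"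

definition best_resp :: "pmodel \<Rightarrow> alloc_rule \<Rightarrow> nat \<Rightarrow> (nat \<Rightarrow> nat) \<Rightarrow> nat \<Rightarrow>
    (nat \<Rightarrow> nat list) \<Rightarrow> nat \<Rightarrow> nat set \<Rightarrow> (nat \<Rightarrow> nat set) \<Rightarrow> nat set" where
  "best_resp M F n c B pref i Pc A =
     tie_fam (best M c (top c B pref i Pc) {F n c B Pc (A(i := A')) | A'. A' \<subseteq> Pc})"

definition Fstar :: "pmodel \<Rightarrow> alloc_rule \<Rightarrow> nat \<Rightarrow> (nat \<Rightarrow> nat) \<Rightarrow> nat \<Rightarrow>
    (nat \<Rightarrow> nat list) \<Rightarrow> nat \<Rightarrow> nat set \<Rightarrow> (nat \<Rightarrow> nat set) \<Rightarrow> nat set" where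
  "Fstar M F n c B pref i Pc A = F n c B Pc (A(i := best_resp M F n c B pref i Pc A))"

definition successful_antic :: "pmodel \<Rightarrow> nat \<Rightarrow> alloc_rule \<Rightarrow> nat \<Rightarrow> (nat \<Rightarrow> nat) \<Rightarrow> nat \<Rightarrow>
    (nat \<Rightarrow> nat list) \<Rightarrow> nat \<Rightarrow> (nat \<Rightarrow> nat set) \<Rightarrow> nat set \<Rightarrow> bool" where
  "successful_antic M k F n c B pref i Ps Pi' =
    (let Pc = shortlist_R k n c B Ps;
         Pc' = shortlist_R k n c B (Ps(i := Pi'));
         Q = top c B pref i (Pc \<union> Pc')
     in spref M c Q (Fstar M F n c B pref i Pc' (\<lambda>j. top c B pref j Pc'))
                    (Fstar M F n c B pref i Pc (\<lambda>j. top c B pref j Pc)))"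

definition U_FSSP_A :: "pmodel \<Rightarrow> nat \<Rightarrow> alloc_rule \<Rightarrow> bool" where
  "U_FSSP_A M k F =
    (\<forall>(m::nat) (n::nat) (c::nat \<Rightarrow> nat) (B::nat) (pref::nat \<Rightarrow> nat list)
        (C::nat \<Rightarrow> nat set) (Ps::nat \<Rightarrow> nat set) (i::nat).
       (1 \<le> B \<and> (\<forall>p\<in>{1..m}. 1 \<le> c p \<and> c p \<le> B)
        \<and> (\<forall>j\<in>{1..n}. distinct (pref j) \<and> set (pref j) = {1..m})
        \<and> (\<forall>j\<in>{1..n}. C j \<subseteq> {1..m} \<and> Ps j \<subseteq> C j)
        \<and> i \<in> {1..n})
       \<longrightarrow> \<not> (\<exists>Pi'. Pi' \<subseteq> C i \<union> (\<Union>j\<in>{1..n}. Ps j) \<and>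
              successful_antic M k F n c B pref i
                (Ps(i := top c B pref i (C i \<union> (\<Union>j\<in>{1..n}. Ps j)))) Pi'))"

end

theory Submission
  imports Defs
begin


lemma napp_sum: "napp n A p = (\<Sum>i\<in>{1..n}. if p \<in> A i then 1 else 0)"
  unfolding napp_def by (simp add: sum.If_cases Int_def conj_commute)

lemma int13: "{1..3::nat} = {1,2,3}" by auto
lemma int12: "{1..2::nat} = {1,2}" by auto

definition beats :: "nat set \<Rightarrow> nat set \<Rightarrow> bool" where
  "beats X Y = (Min ((X - Y) \<union> (Y - X)) \<in> X)"

lemma tie_fam_eq:
  assumes fin: "\<forall>P\<in>Fam. finite P" and X: "X \<in> Fam"
    and mx: "\<forall>P'\<in>Fam. P' \<noteq> X \<longrightarrow> Min ((X - P') \<union> (P' - X)) \<in> X"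
  shows "tie_fam Fam = X"
  unfolding tie_fam_def
proof (rule the_equality)
  show "X \<in> Fam \<and> (\<forall>P'\<in>Fam. P' \<noteq> X \<longrightarrow> Min ((X - P') \<union> (P' - X)) \<in> X)" using X mx by blast
next
  fix P assume P: "P \<in> Fam \<and> (\<forall>P'\<in>Fam. P' \<noteq> P \<longrightarrow> Min ((P - P') \<union> (P' - P)) \<in> P)"
  show "P = X"
  proof (rule ccontr)
    assume ne: "P \<noteq> X"
    let ?S = "(X - P) \<union> (P - X)"
    have S2: "(P - X) \<union> (X - P) = ?S" by blast
    have m1: "Min ?S \<in> P" using P X ne S2 by metis
    have m2: "Min ?S \<in> X" using mx P ne by metis
    have f: "finite ?S" using fin P X by blast
    have ne2: "?S \<noteq> {}" using ne by blast
    have "Min ?S \<in> ?S" by (rule Min_in[OF f ne2])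
    thus False using m1 m2 by blast
  qed
qed

lemma tie_fam_single: "finite X \<Longrightarrow> tie_fam {X} = X"
  by (rule tie_fam_eq) auto

lemma beats_total:
  assumes "finite X" "finite Y" "X \<noteq> Y" "\<not> beats X Y" shows "beats Y X"
proof -
  let ?S = "(X - Y) \<union> (Y - X)"
  have "finite ?S" "?S \<noteq> {}" using assms by auto
  hence "Min ?S \<in> ?S" by (rule Min_in)
  moreover have "(Y - X) \<union> (X - Y) = ?S" by blast
  ultimately show ?thesis using assms(4) unfolding beats_def by auto
qed

lemma beats_trans:
  assumes fX: "finite X" and fY: "finite Y" and fZ: "finite Z"
    and "X \<noteq> Y" "Y \<noteq> Z" and bXY: "beats X Y" and bYZ: "beats Y Z"
  shows "X \<noteq> Z \<and> beats X Z"
proof -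
  let ?S1 = "(X - Y) \<union> (Y - X)" and ?S2 = "(Y - Z) \<union> (Z - Y)" and ?S3 = "(X - Z) \<union> (Z - X)"
  define a where "a = Min ?S1"
  define b where "b = Min ?S2"
  have f1: "finite ?S1" "?S1 \<noteq> {}" using assms by auto
  have f2: "finite ?S2" "?S2 \<noteq> {}" using assms by auto
  have aS: "a \<in> ?S1" unfolding a_def by (rule Min_in[OF f1])
  have bS: "b \<in> ?S2" unfolding b_def by (rule Min_in[OF f2])
  have al: "\<And>j. j \<in> ?S1 \<Longrightarrow> a \<le> j" using f1 a_def by simp
  have bl: "\<And>j. j \<in> ?S2 \<Longrightarrow> b \<le> j" using f2 b_def by simp
  have aX: "a \<in> X" using bXY a_def beats_def by simp
  have bY: "b \<in> Y" using bYZ b_def beats_def by simp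
  have aY: "a \<notin> Y" using aX aS by blast
  have bZ: "b \<notin> Z" using bY bS by blast
  define d where "d = min a b"
  have dS: "d \<in> ?S3"
  proof (cases "a < b")
    case True
    hence "a \<notin> ?S2" using bl by force
    thus ?thesis using aX aY True d_def by auto
  next
    case False
    have "a \<noteq> b" using aY bY by blast
    hence "b < a" using False by simp
    hence "b \<notin> ?S1" using al by force
    thus ?thesis using bY bZ \<open>b < a\<close> d_def by auto
  qed
  have dl: "\<And>j. j \<in> ?S3 \<Longrightarrow> d \<le> j"
  proof (rule ccontr)
    fix j assume j: "j \<in> ?S3" "\<not> d \<le> j"
    hence "j < a" "j < b" using d_def by auto
    hence "j \<notin> ?S1" "j \<notin> ?S2" using al bl by force+
    thus False using j by blast
  qed
  have fin3: "finite ?S3" using fX fZ by simp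
  have m3: "Min ?S3 = d" by (rule Min_eqI[OF fin3 dl dS])
  have dX: "d \<in> X"
  proof (cases "a < b")
    case True thus ?thesis using aX d_def by simp
  next
    case False
    have "a \<noteq> b" using aY bY by blast
    hence "b < a" using False by simp
    hence "b \<notin> ?S1" using al by force
    thus ?thesis using bY \<open>b < a\<close> d_def by auto
  qed
  have "X \<noteq> Z" using dS by blast
  thus ?thesis unfolding beats_def m3 using dX by simp
qed

lemma tie_exists:
  assumes "finite Fam" "Fam \<noteq> {}" "\<forall>P\<in>Fam. finite P"
  shows "\<exists>X\<in>Fam. \<forall>P'\<in>Fam. P' \<noteq> X \<longrightarrow> beats X P'"
  using assms
proof (induction Fam rule: finite_ne_induct)
  case (singleton x) thus ?case by blast
next
  case (insert Y F)
  have finF: "\<forall>P\<in>F. finite P" and fY: "finite Y" using insert.prems by blast+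
  obtain X where X: "X \<in> F" "\<forall>P'\<in>F. P' \<noteq> X \<longrightarrow> beats X P'" using insert.IH[OF finF] by blast
  have fX: "finite X" using finF X(1) by blast
  show ?case
  proof (cases "Y = X \<or> beats X Y")
    case True
    have "\<forall>P'\<in>insert Y F. P' \<noteq> X \<longrightarrow> beats X P'" using True X(2) by blast
    thus ?thesis using X(1) by blast
  next
    case False
    have YX: "Y \<noteq> X" and nb: "\<not> beats X Y" using False by blast+
    have bYX: "beats Y X" by (rule beats_total[OF fX fY YX[symmetric] nb])
    have "\<forall>P'\<in>insert Y F. P' \<noteq> Y \<longrightarrow> beats Y P'"
    proof (intro ballI impI)
      fix P' assume P': "P' \<in> insert Y F" "P' \<noteq> Y"
      show "beats Y P'"
      proof (cases "P' = X")
        case True thus ?thesis using bYX by simp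
      next
        case False
        have PF: "P' \<in> F" using P' by blast
        hence "beats X P'" using X(2) False by blast
        note bXP = this
        have fP: "finite P'" using finF PF by blast
        have XP: "X \<noteq> P'" using False by blast
        show ?thesis using beats_trans[OF fY fX fP YX XP bYX bXP] by blast
      qed
    qed
    thus ?thesis by blast
  qed
qed

lemma tie_fam_in:
  assumes "finite Fam" "Fam \<noteq> {}" "\<forall>P\<in>Fam. finite P"
  shows "tie_fam Fam \<in> Fam"
proof -
  obtain X where "X \<in> Fam" "\<forall>P'\<in>Fam. P' \<noteq> X \<longrightarrow> beats X P'" using tie_exists[OF assms] by blast
  hence "tie_fam Fam = X" using assms(3) by (intro tie_fam_eq) (auto simp: beats_def)
  thus ?thesis using \<open>X \<in> Fam\<close> by simp
qed



lemma greed_aux_inv: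
  "finite S \<Longrightarrow> sum c S \<le> B \<Longrightarrow> finite (greed_aux c B xs S) \<and> sum c (greed_aux c B xs S) \<le> B
     \<and> greed_aux c B xs S \<subseteq> S \<union> set xs"
proof (induction xs arbitrary: S)
  case Nil thus ?case by simp
next
  case (Cons x xs)
  let ?S' = "if sum c (insert x S) \<le> B then insert x S else S"
  have "finite ?S'" "sum c ?S' \<le> B" "?S' \<subseteq> S \<union> {x}" using Cons.prems by auto
  thus ?case using Cons.IH[of ?S'] by auto
qed

lemma greedy_feas:
  assumes "finite Pc"
  shows "greedy_approval n c B Pc A \<subseteq> Pc \<and> sum c (greedy_approval n c B Pc A) \<le> B"
  using greed_aux_inv[of "{}" c B] assms
  unfolding greedy_approval_def greed_def by fastforce

lemma am_feas:
  assumes "finite Pc"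
  shows "approval_max n c B Pc A \<subseteq> Pc \<and> sum c (approval_max n c B Pc A) \<le> B"
proof -
  define feas where "feas = {X. X \<subseteq> Pc \<and> sum c X \<le> B}"
  define f where "f = (\<lambda>X. \<Sum>p\<in>X. napp n A p)"
  define G where "G = {X \<in> feas. \<forall>Y\<in>feas. f Y \<le> f X}"
  have am: "approval_max n c B Pc A = tie_fam G"
    unfolding approval_max_def G_def feas_def f_def Let_def by simp
  have ffeas: "finite feas" unfolding feas_def
    using assms by (rule rev_finite_subset[OF finite_Pow_iff[THEN iffD2]]) auto
  have "{} \<in> feas" unfolding feas_def by simp
  hence ne: "f ` feas \<noteq> {}" by blast
  have "Max (f ` feas) \<in> f ` feas" using ffeas ne by (intro Max_in) auto
  then obtain X where X: "X \<in> feas" "f X = Max (f ` feas)" by auto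
  have "X \<in> G" unfolding G_def using X ffeas by auto
  hence "G \<noteq> {}" by blast
  moreover have "finite G" using ffeas unfolding G_def by simp
  moreover have "\<forall>P\<in>G. finite P" unfolding G_def feas_def using assms finite_subset by auto
  ultimately have "tie_fam G \<in> G" using tie_fam_in by blast
  thus ?thesis unfolding am G_def feas_def by simp
qed

lemma F_feas:
  assumes "F \<in> {greedy_approval, approval_max}" "finite Pc"
  shows "F n c B Pc A \<subseteq> Pc \<and> sum c (F n c B Pc A) \<le> B"
proof -
  from assms(1) consider "F = greedy_approval" | "F = approval_max" by blast
  thus ?thesis
  proof cases
    case 1 show ?thesis unfolding 1 by (rule greedy_feas[OF assms(2)])
  next
    case 2 show ?thesis unfolding 2 by (rule am_feas[OF assms(2)])
  qed
qed

lemma F_single: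
  assumes "F \<in> {greedy_approval, approval_max}" "c p \<le> B"
  shows "F n c B {p} A = {p}"
proof (cases "F = greedy_approval")
  case True thus ?thesis using assms by (simp add: greedy_approval_def greed_def)
next
  case False
  hence F: "F = approval_max" using assms by auto
  have feas: "{X. X \<subseteq> {p} \<and> sum c X \<le> B} = {{}, {p}}" using assms(2)
    by (auto simp: subset_singleton_iff)
  define G where "G = {X \<in> {{}, {p}}. \<forall>Y\<in>{{}, {p}}. (\<Sum>p\<in>Y. napp n A p) \<le> (\<Sum>p\<in>X. napp n A p)}"
  have "approval_max n c B {p} A = tie_fam G"
    unfolding approval_max_def Let_def feas G_def by simp
  also have "\<dots> = {p}"
    by (rule tie_fam_eq) (auto simp: G_def)
  finally show ?thesis using F by simp
qed

lemma Fstar_const: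
  assumes "\<forall>A'. A' \<subseteq> Pc \<longrightarrow> F n c B Pc (A(i:=A')) = X" "X \<subseteq> Pc" "finite X"
  shows "Fstar M F n c B pref i Pc A = X"
proof -
  have fam: "{F n c B Pc (A(i := A')) | A'. A' \<subseteq> Pc} = {X}" using assms(1) by blast
  have sp: "\<not> spref M c Q X X" for Q by (cases M) (auto simp: spref_def)
  have "best M c (top c B pref i Pc) {X} = {X}" using sp by (auto simp: best_def)
  hence "best_resp M F n c B pref i Pc A = X"
    unfolding best_resp_def fam using tie_fam_single[OF assms(3)] by simp
  thus ?thesis unfolding Fstar_def using assms by simp
qed

lemma spref_single:
  assumes "c q > 0"
  shows "spref M c {q} Y X \<longleftrightarrow> q \<in> Y \<and> q \<notin> X"
proof -
  have e: "Z \<inter> {q} = (if q \<in> Z then {q} else {})" for Z by auto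
  show ?thesis using assms by (cases M) (auto simp: spref_def e)
qed

lemma Fstar_win:
  assumes "F n c B Pc (A(i:={q})) = {q}"
    and "\<forall>A'. A' \<subseteq> Pc \<longrightarrow> q \<in> F n c B Pc (A(i:=A')) \<longrightarrow> F n c B Pc (A(i:=A')) = {q}"
    and "top c B pref i Pc = {q}" "c q > 0" "q \<in> Pc"
  shows "Fstar M F n c B pref i Pc A = {q}"
proof -
  define Fam where "Fam = {F n c B Pc (A(i := A')) | A'. A' \<subseteq> Pc}"
  have q: "{q} \<in> Fam" unfolding Fam_def using assms(1,5) by force
  have "best M c {q} Fam = {{q}}"
  proof
    show "{{q}} \<subseteq> best M c {q} Fam" using q by (auto simp: best_def spref_single[of c q, OF assms(4)])
    show "best M c {q} Fam \<subseteq> {{q}}"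
    proof
      fix X assume X: "X \<in> best M c {q} Fam"
      hence "q \<in> X" using q by (auto simp: best_def spref_single[of c q, OF assms(4)])
      moreover have "X \<in> Fam" using X by (auto simp: best_def)
      ultimately show "X \<in> {{q}}" using assms(2) unfolding Fam_def by auto
    qed
  qed
  hence "best_resp M F n c B pref i Pc A = {q}"
    unfolding best_resp_def assms(3) Fam_def[symmetric] by (simp add: tie_fam_single)
  thus ?thesis unfolding Fstar_def using assms(1) by simp
qed



lemma g_less:
  assumes "(n::nat) \<ge> 1" "t < t'"
  shows "(\<Sum>l\<in>{0..t}. (1 / real n) ^ l) < (\<Sum>l\<in>{0..t'}. (1 / real n) ^ l)"
proof -
  define g where "g = (\<lambda>t. (\<Sum>l\<in>{0..t}. (1 / real n) ^ l))"
  have step: "g s < g (Suc s)" for s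
  proof -
    have pos: "0 < (1 / real n) ^ Suc s" using assms(1) by simp
    have "g (Suc s) = g s + (1 / real n) ^ Suc s" unfolding g_def by (rule sum.atLeast0_atMost_Suc)
    thus ?thesis using pos by linarith
  qed
  have "g t < g t'" by (rule lift_Suc_mono_less[of g, OF step assms(2)])
  thus ?thesis unfolding g_def .
qed

lemma g_le:
  assumes "(n::nat) \<ge> 1" "t \<le> t'"
  shows "(\<Sum>l\<in>{0..t}. (1 / real n) ^ l) \<le> (\<Sum>l\<in>{0..t'}. (1 / real n) ^ l)"
proof (cases "t = t'")
  case True thus ?thesis by simp
next
  case False
  hence "t < t'" using assms(2) by simp
  thus ?thesis using g_less[OF assms(1)] less_imp_le by blast
qed

lemma score_less:
  assumes "n \<ge> 1" "finite U" "P \<subseteq> U" "x \<in> U" "x \<notin> P" "j \<in> {1..n}" "x \<in> Ps j"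
  shows "eqrep_score n Ps P < eqrep_score n Ps U"
  unfolding eqrep_score_def
proof (rule sum_strict_mono_ex1)
  show "finite {1..n}" by simp
  show "\<forall>i\<in>{1..n}. (\<Sum>l = 0..card (Ps i \<inter> P). (1 / real n) ^ l) \<le> (\<Sum>l = 0..card (Ps i \<inter> U). (1 / real n) ^ l)"
  proof
    fix i
    have "Ps i \<inter> P \<subseteq> Ps i \<inter> U" using assms(3) by blast
    moreover have "finite (Ps i \<inter> U)" using assms(2) by simp
    ultimately have "card (Ps i \<inter> P) \<le> card (Ps i \<inter> U)" by (rule card_mono[rotated])
    thus "(\<Sum>l = 0..card (Ps i \<inter> P). (1 / real n) ^ l) \<le> (\<Sum>l = 0..card (Ps i \<inter> U). (1 / real n) ^ l)"
      by (rule g_le[OF assms(1)])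
  qed
  have "Ps j \<inter> P \<subset> Ps j \<inter> U" using assms(3-5,7) by blast
  moreover have "finite (Ps j \<inter> U)" using assms(2) by simp
  ultimately have "card (Ps j \<inter> P) < card (Ps j \<inter> U)" by (rule psubset_card_mono[rotated])
  hence "(\<Sum>l = 0..card (Ps j \<inter> P). (1 / real n) ^ l) < (\<Sum>l = 0..card (Ps j \<inter> U). (1 / real n) ^ l)"
    by (rule g_less[OF assms(1)])
  thus "\<exists>a\<in>{1..n}. (\<Sum>l = 0..card (Ps a \<inter> P). (1 / real n) ^ l) < (\<Sum>l = 0..card (Ps a \<inter> U). (1 / real n) ^ l)"
    using assms(6) by blast
qed

lemma shortlist_full:
  assumes "n \<ge> 1" "finite (\<Union>i\<in>{1..n}. Ps i)" "sum c (\<Union>i\<in>{1..n}. Ps i) \<le> k * B"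
  shows "shortlist_R k n c B Ps = (\<Union>i\<in>{1..n}. Ps i)"
proof -
  define U where "U = (\<Union>i\<in>{1..n}. Ps i)"
  define feas where "feas = {P. P \<subseteq> U \<and> sum c P \<le> k * B}"
  define s where "s = eqrep_score n Ps"
  have lt: "P \<in> feas \<Longrightarrow> P \<noteq> U \<Longrightarrow> s P < s U" for P
  proof -
    assume "P \<in> feas" "P \<noteq> U"
    hence PU: "P \<subseteq> U" and "\<exists>x\<in>U. x \<notin> P" unfolding feas_def by auto
    then obtain x where x: "x \<in> U" "x \<notin> P" by blast
    then obtain j where j: "j \<in> {1..n}" "x \<in> Ps j" unfolding U_def by blast
    have fU: "finite U" using assms(2) U_def by simp
    show ?thesis unfolding s_def by (rule score_less[where Ps=Ps and j=j and x=x, OF assms(1) fU PU x j])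
  qed
  have Uf: "U \<in> feas" unfolding feas_def U_def using assms by simp
  have "{P \<in> feas. \<forall>P'\<in>feas. s P' \<le> s P} = {U}"
  proof
    show "{U} \<subseteq> {P \<in> feas. \<forall>P'\<in>feas. s P' \<le> s P}"
    proof
      fix X assume "X \<in> {U}"
      hence X: "X = U" by simp
      have "\<forall>P'\<in>feas. s P' \<le> s U"
      proof
        fix P' assume "P' \<in> feas"
        thus "s P' \<le> s U" using lt[of P'] by (cases "P' = U") auto
      qed
      thus "X \<in> {P \<in> feas. \<forall>P'\<in>feas. s P' \<le> s P}" using X Uf by simp
    qed
    show "{P \<in> feas. \<forall>P'\<in>feas. s P' \<le> s P} \<subseteq> {U}"
    proof
      fix X assume X: "X \<in> {P \<in> feas. \<forall>P'\<in>feas. s P' \<le> s P}"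
      hence "s U \<le> s X" "X \<in> feas" using Uf by auto
      thus "X \<in> {U}" using lt[of X] by (cases "X = U") auto
    qed
  qed
  hence "shortlist_R k n c B Ps = tie_fam {U}"
    unfolding shortlist_R_def Let_def U_def[symmetric] feas_def[symmetric] s_def by simp
  thus ?thesis using tie_fam_single assms(2) U_def by simp
qed

lemma shortlist_eq:
  assumes fU: "finite (\<Union>i\<in>{1..n}. Ps i)"
    and X: "X \<subseteq> (\<Union>i\<in>{1..n}. Ps i)" "sum c X \<le> k * B"
    and mx: "\<And>Y. Y \<subseteq> (\<Union>i\<in>{1..n}. Ps i) \<Longrightarrow> sum c Y \<le> k * B \<Longrightarrow> eqrep_score n Ps Y \<le> eqrep_score n Ps X"
    and tb: "\<And>Y. Y \<subseteq> (\<Union>i\<in>{1..n}. Ps i) \<Longrightarrow> sum c Y \<le> k * B \<Longrightarrow> eqrep_score n Ps Y = eqrep_score n Ps X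
              \<Longrightarrow> Y \<noteq> X \<Longrightarrow> Min ((X - Y) \<union> (Y - X)) \<in> X"
  shows "shortlist_R k n c B Ps = X"
  unfolding shortlist_R_def Let_def
proof (rule tie_fam_eq)
  show "\<forall>P\<in>{P \<in> {P. P \<subseteq> (\<Union>i\<in>{1..n}. Ps i) \<and> sum c P \<le> k * B}.
        \<forall>P'\<in>{P. P \<subseteq> (\<Union>i\<in>{1..n}. Ps i) \<and> sum c P \<le> k * B}. eqrep_score n Ps P' \<le> eqrep_score n Ps P}. finite P"
    using fU finite_subset by blast
  show "X \<in> {P \<in> {P. P \<subseteq> (\<Union>i\<in>{1..n}. Ps i) \<and> sum c P \<le> k * B}.
        \<forall>P'\<in>{P. P \<subseteq> (\<Union>i\<in>{1..n}. Ps i) \<and> sum c P \<le> k * B}. eqrep_score n Ps P' \<le> eqrep_score n Ps P}"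
    using X mx by blast
  show "\<forall>P'\<in>{P \<in> {P. P \<subseteq> (\<Union>i\<in>{1..n}. Ps i) \<and> sum c P \<le> k * B}.
        \<forall>P'\<in>{P. P \<subseteq> (\<Union>i\<in>{1..n}. Ps i) \<and> sum c P \<le> k * B}. eqrep_score n Ps P' \<le> eqrep_score n Ps P}.
         P' \<noteq> X \<longrightarrow> Min ((X - P') \<union> (P' - X)) \<in> X"
  proof (intro ballI impI)
    fix Y assume Y: "Y \<in> {P \<in> {P. P \<subseteq> (\<Union>i\<in>{1..n}. Ps i) \<and> sum c P \<le> k * B}.
        \<forall>P'\<in>{P. P \<subseteq> (\<Union>i\<in>{1..n}. Ps i) \<and> sum c P \<le> k * B}. eqrep_score n Ps P' \<le> eqrep_score n Ps P}"
      and ne: "Y \<noteq> X"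
    hence "Y \<subseteq> (\<Union>i\<in>{1..n}. Ps i)" "sum c Y \<le> k * B" "eqrep_score n Ps X \<le> eqrep_score n Ps Y"
      using X by auto
    moreover hence "eqrep_score n Ps Y \<le> eqrep_score n Ps X" using mx by blast
    ultimately show "Min ((X - Y) \<union> (Y - X)) \<in> X" using tb ne by force
  qed
qed

lemma am_eq:
  assumes fP: "finite Pc"
    and X: "X \<subseteq> Pc" "sum c X \<le> B"
    and mx: "\<And>Y. Y \<subseteq> Pc \<Longrightarrow> sum c Y \<le> B \<Longrightarrow> (\<Sum>p\<in>Y. napp n A p) \<le> (\<Sum>p\<in>X. napp n A p)"
    and tb: "\<And>Y. Y \<subseteq> Pc \<Longrightarrow> sum c Y \<le> B \<Longrightarrow> (\<Sum>p\<in>Y. napp n A p) = (\<Sum>p\<in>X. napp n A p)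
              \<Longrightarrow> Y \<noteq> X \<Longrightarrow> Min ((X - Y) \<union> (Y - X)) \<in> X"
  shows "approval_max n c B Pc A = X"
  unfolding approval_max_def Let_def
proof (rule tie_fam_eq)
  show "\<forall>P\<in>{Xa \<in> {X. X \<subseteq> Pc \<and> sum c X \<le> B}. \<forall>Y\<in>{X. X \<subseteq> Pc \<and> sum c X \<le> B}. sum (napp n A) Y \<le> sum (napp n A) Xa}. finite P"
    using fP finite_subset by blast
  show "X \<in> {Xa \<in> {X. X \<subseteq> Pc \<and> sum c X \<le> B}. \<forall>Y\<in>{X. X \<subseteq> Pc \<and> sum c X \<le> B}. sum (napp n A) Y \<le> sum (napp n A) Xa}"
    using X mx by blast
  show "\<forall>P'\<in>{Xa \<in> {X. X \<subseteq> Pc \<and> sum c X \<le> B}. \<forall>Y\<in>{X. X \<subseteq> Pc \<and> sum c X \<le> B}. sum (napp n A) Y \<le> sum (napp n A) Xa}.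
          P' \<noteq> X \<longrightarrow> Min ((X - P') \<union> (P' - X)) \<in> X"
  proof (intro ballI impI)
    fix Y assume Y: "Y \<in> {Xa \<in> {X. X \<subseteq> Pc \<and> sum c X \<le> B}. \<forall>Y\<in>{X. X \<subseteq> Pc \<and> sum c X \<le> B}. sum (napp n A) Y \<le> sum (napp n A) Xa}"
      and ne: "Y \<noteq> X"
    hence "Y \<subseteq> Pc" "sum c Y \<le> B" "sum (napp n A) X \<le> sum (napp n A) Y"
      using X by auto
    moreover hence "sum (napp n A) Y \<le> sum (napp n A) X" using mx by blast
    ultimately show "Min ((X - Y) \<union> (Y - X)) \<in> X" using tb ne by force
  qed
qed

lemma small_sets:
  fixes a b :: nat
  assumes "Y \<subseteq> S" "finite S" "sum (\<lambda>_. a) Y \<le> b" "b < 2 * a"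
  shows "Y = {} \<or> (\<exists>y\<in>S. Y = {y})"
proof -
  have fY: "finite Y" using assms finite_subset by blast
  have "sum (\<lambda>_. a) Y = a * card Y" by simp
  hence "a * card Y < a * 2" using assms(3,4) by linarith
  hence "card Y < 2" by simp
  hence "card Y = 0 \<or> card Y = 1" by linarith
  thus ?thesis using fY assms(1) card_1_singletonE by (metis card_0_eq insert_subset)
qed


lemma napp3: "napp 3 A p = (if p \<in> A 1 then 1 else 0) + (if p \<in> A 2 then 1 else 0) + (if p \<in> A 3 then 1 else 0)"
  unfolding napp_sum int13 by (simp add: add.assoc)

lemma g0: "(\<Sum>l\<in>{0..0::nat}. (x::real)^l) = 1" by simp
lemma g1: "(\<Sum>l\<in>{0..Suc 0}. (x::real)^l) = 1 + x" by (simp add: sum.atLeast0_atMost_Suc)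

definition prefB :: "nat \<Rightarrow> nat list" where
  "prefB j = (if j = 1 then [1,2,3] else if j = 2 then [3,2,1] else [2,1,3])"
definition PsB :: "nat \<Rightarrow> nat set" where
  "PsB j = (if j = 1 then {} else {2})"
definition CB :: "nat \<Rightarrow> nat set" where
  "CB j = (if j = 1 then {1,3} else {2})"

lemma fin_small:
  assumes "Y \<subseteq> {1,2,3::nat}" "sum (\<lambda>_. 2::nat) Y \<le> 3"
  shows "Y = {} \<or> Y = {1} \<or> Y = {2} \<or> Y = {3}"
  using small_sets[of Y "{1,2,3}" 2 3] assms by auto

lemma fin_small2:
  assumes "Y \<subseteq> {1,2::nat}" "sum (\<lambda>_. 2::nat) Y \<le> 3"
  shows "Y = {} \<or> Y = {1} \<or> Y = {2}"
  using small_sets[of Y "{1,2}" 2 3] assms by auto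

lemma instB_F3:
  assumes "F \<in> {greedy_approval, approval_max}"
  shows "F 3 (\<lambda>_. 2) 3 {1,2,3} ((\<lambda>j. top (\<lambda>_. 2) 3 prefB j {1,2,3})(1 := {1})) = {1}"
proof -
  define A where "A = ((\<lambda>j. top (\<lambda>_. 2) 3 prefB j {1,2,3})(1 := {1}))"
  have A: "A = (\<lambda>j. if j = 1 then {1} else if j = 2 then {3} else {2})"
    unfolding A_def by (rule ext) (simp add: top_def greed_def prefB_def)
  have n1: "napp 3 A 1 = 1" and n2: "napp 3 A 2 = 1" and n3: "napp 3 A 3 = 1"
    by (simp_all add: napp3 A)
  have n1s: "napp 3 A (Suc 0) = 1" using n1 by simp
  have "greedy_approval 3 (\<lambda>_. 2) 3 {1,2,3} A = {1}"
    unfolding greedy_approval_def by (simp add: n1 n1s n2 n3 greed_def)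
  moreover have "approval_max 3 (\<lambda>_. 2) 3 {1,2,3} A = {1}"
  proof (rule am_eq)
    fix Y :: "nat set" assume Y: "Y \<subseteq> {1,2,3}" "sum (\<lambda>_. 2::nat) Y \<le> 3"
    show "(\<Sum>p\<in>Y. napp 3 A p) \<le> (\<Sum>p\<in>{1}. napp 3 A p)"
      using fin_small[OF Y] n1 n2 n3 by auto
    show "(\<Sum>p\<in>Y. napp 3 A p) = (\<Sum>p\<in>{1}. napp 3 A p) \<Longrightarrow> Y \<noteq> {1} \<Longrightarrow> Min (({1} - Y) \<union> (Y - {1})) \<in> {1}"
      using fin_small[OF Y] n1 n2 n3 by auto
  qed auto
  ultimately show ?thesis using assms A_def by auto
qed

lemma instB_F2:
  assumes "F \<in> {greedy_approval, approval_max}" "A' \<subseteq> {1,2}"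
  shows "F 3 (\<lambda>_. 2) 3 {1,2} ((\<lambda>j. top (\<lambda>_. 2) 3 prefB j {1,2})(1 := A')) = {2}"
proof -
  define A where "A = ((\<lambda>j. top (\<lambda>_. 2) 3 prefB j {1,2})(1 := A'))"
  have A: "A = (\<lambda>j. if j = 1 then A' else {2})"
    unfolding A_def by (rule ext) (simp add: top_def greed_def prefB_def)
  have n1: "napp 3 A 1 = (if 1 \<in> A' then 1 else 0)" and n2: "napp 3 A 2 = (if 2 \<in> A' then 1 else 0) + 2"
    by (simp_all add: napp3 A)
  have n1s: "napp 3 A (Suc 0) = (if 1 \<in> A' then 1 else 0)" using n1 by simp
  have "greedy_approval 3 (\<lambda>_. 2) 3 {1,2} A = {2}"
    unfolding greedy_approval_def by (cases "1 \<in> A'"; cases "2 \<in> A'") (simp_all add: n1 n1s n2 greed_def)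
  moreover have "approval_max 3 (\<lambda>_. 2) 3 {1,2} A = {2}"
  proof (rule am_eq)
    fix Y :: "nat set" assume Y: "Y \<subseteq> {1,2}" "sum (\<lambda>_. 2::nat) Y \<le> 3"
    show "(\<Sum>p\<in>Y. napp 3 A p) \<le> (\<Sum>p\<in>{2}. napp 3 A p)"
      using fin_small2[OF Y] n1 n2 by (auto split: if_splits)
    show "(\<Sum>p\<in>Y. napp 3 A p) = (\<Sum>p\<in>{2}. napp 3 A p) \<Longrightarrow> Y \<noteq> {2} \<Longrightarrow> Min (({2} - Y) \<union> (Y - {2})) \<in> {2}"
      using fin_small2[OF Y] n1 n2 by (auto split: if_splits)
  qed auto
  ultimately show ?thesis using assms A_def by auto
qed

lemma instB:
  assumes k: "k \<ge> 2" and F: "F \<in> {greedy_approval, approval_max}"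
  shows "successful_antic M k F 3 (\<lambda>_. 2) 3 prefB 1 (PsB(1 := {1})) {1,3}"
proof -
  have U1: "(\<Union>j\<in>{1..3}. (PsB(1:={1})) j) = {1,2}" unfolding int13 by (auto simp: PsB_def)
  have U2: "(\<Union>j\<in>{1..3}. (PsB(1:={1,3})) j) = {1,2,3}" unfolding int13 by (auto simp: PsB_def)
  have f1: "finite (\<Union>j\<in>{1..3}. (PsB(1:={1})) j)" unfolding U1 by simp
  have s1: "sum (\<lambda>_. 2::nat) (\<Union>j\<in>{1..3}. (PsB(1:={1})) j) \<le> k * 3" unfolding U1 using k by simp
  have f2: "finite (\<Union>j\<in>{1..3}. (PsB(1:={1,3})) j)" unfolding U2 by simp
  have s2: "sum (\<lambda>_. 2::nat) (\<Union>j\<in>{1..3}. (PsB(1:={1,3})) j) \<le> k * 3" unfolding U2 using k by simp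
  have e1: "shortlist_R k 3 (\<lambda>_. 2) 3 (PsB(1:={1})) = (\<Union>j\<in>{1..3}. (PsB(1:={1})) j)"
    by (rule shortlist_full[OF _ f1 s1]) simp
  have e2: "shortlist_R k 3 (\<lambda>_. 2) 3 (PsB(1:={1,3})) = (\<Union>j\<in>{1..3}. (PsB(1:={1,3})) j)"
    by (rule shortlist_full[OF _ f2 s2]) simp
  have Pc: "shortlist_R k 3 (\<lambda>_. 2) 3 (PsB(1:={1})) = {1,2}" by (rule trans[OF e1 U1])
  have Pc': "shortlist_R k 3 (\<lambda>_. 2) 3 ((PsB(1:={1}))(1:={1,3})) = {1,2,3}"
    unfolding fun_upd_upd by (rule trans[OF e2 U2])
  have Q: "top (\<lambda>_. 2) 3 prefB 1 ({1,2} \<union> {1,2,3}) = {1}"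
    by (simp add: top_def greed_def prefB_def)
  have t3: "top (\<lambda>_. 2) 3 prefB 1 {1,2,3} = {1}"
    by (simp add: top_def greed_def prefB_def)
  have S1: "Fstar M F 3 (\<lambda>_. 2) 3 prefB 1 {1,2,3} (\<lambda>j. top (\<lambda>_. 2) 3 prefB j {1,2,3}) = {1}"
  proof (rule Fstar_win)
    show "F 3 (\<lambda>_. 2) 3 {1,2,3} ((\<lambda>j. top (\<lambda>_. 2) 3 prefB j {1,2,3})(1 := {1})) = {1}"
      by (rule instB_F3[OF F])
    show "top (\<lambda>_. 2) 3 prefB 1 {1,2,3} = {1}" by (rule t3)
    show "\<forall>A'. A' \<subseteq> {1,2,3} \<longrightarrow> 1 \<in> F 3 (\<lambda>_. 2) 3 {1,2,3} ((\<lambda>j. top (\<lambda>_. 2) 3 prefB j {1,2,3})(1 := A'))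
       \<longrightarrow> F 3 (\<lambda>_. 2) 3 {1,2,3} ((\<lambda>j. top (\<lambda>_. 2) 3 prefB j {1,2,3})(1 := A')) = {1}"
    proof (intro allI impI)
      fix A' :: "nat set"
      let ?X = "F 3 (\<lambda>_. 2) 3 {1,2,3} ((\<lambda>j. top (\<lambda>_. 2) 3 prefB j {1,2,3})(1 := A'))"
      assume m: "1 \<in> ?X"
      have fe: "?X \<subseteq> {1,2,3} \<and> sum (\<lambda>_. 2::nat) ?X \<le> 3" by (rule F_feas[OF F]) simp
      have "?X = {} \<or> ?X = {1} \<or> ?X = {2} \<or> ?X = {3}" by (rule fin_small[OF conjunct1[OF fe] conjunct2[OF fe]])
      thus "?X = {1}" using m by auto
    qed
  qed auto
  have S2: "Fstar M F 3 (\<lambda>_. 2) 3 prefB 1 {1,2} (\<lambda>j. top (\<lambda>_. 2) 3 prefB j {1,2}) = {2}"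
  proof (rule Fstar_const)
    show "\<forall>A'. A' \<subseteq> {1,2} \<longrightarrow> F 3 (\<lambda>_. 2) 3 {1,2} ((\<lambda>j. top (\<lambda>_. 2) 3 prefB j {1,2})(1 := A')) = {2}"
      using instB_F2[OF F] by blast
  qed auto
  have sp: "spref M (\<lambda>_. 2) {1} {1} {2}" by (subst spref_single) auto
  show ?thesis
    unfolding successful_antic_def Let_def Pc Pc' Q S1 S2 by (rule sp)
qed


definition prefA :: "nat \<Rightarrow> nat list" where
  "prefA j = (if j = 1 then [3,1,2] else [2,1,3])"
definition PsA :: "nat \<Rightarrow> nat set" where
  "PsA j = (if j = 1 then {} else {2})"
definition CA :: "nat \<Rightarrow> nat set" where
  "CA j = (if j = 1 then {1,3} else {2})"

lemma g1': "(\<Sum>l\<in>{0..1::nat}. (x::real)^l) = 1 + x" by (simp add: sum.atLeast0_atMost_Suc)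

lemma fin_smallA:
  assumes "Y \<subseteq> {a,b::nat}" "sum (\<lambda>_. 1::nat) Y \<le> 1 * 1"
  shows "Y = {} \<or> Y = {a} \<or> Y = {b}"
  using small_sets[of Y "{a,b}" 1 1] assms by auto

lemma instA:
  assumes F: "F \<in> {greedy_approval, approval_max}"
  shows "successful_antic M 1 F 2 (\<lambda>_. 1) 1 prefA 1 (PsA(1 := {3})) {1}"
proof -
  have U1: "(\<Union>j\<in>{1..2}. (PsA(1:={3})) j) = {2,3}" unfolding int12 by (auto simp: PsA_def)
  have U2: "(\<Union>j\<in>{1..2}. (PsA(1:={1})) j) = {1,2}" unfolding int12 by (auto simp: PsA_def)
  have sc: "eqrep_score 2 (PsA(1:={3})) {} = 2" "eqrep_score 2 (PsA(1:={3})) {2} = 5/2"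
     "eqrep_score 2 (PsA(1:={3})) {3} = 5/2"
    unfolding eqrep_score_def int12 by (simp_all add: PsA_def g0 g1 g1')
  have sc': "eqrep_score 2 (PsA(1:={1})) {} = 2" "eqrep_score 2 (PsA(1:={1})) {1} = 5/2"
     "eqrep_score 2 (PsA(1:={1})) {2} = 5/2"
    unfolding eqrep_score_def int12 by (simp_all add: PsA_def g0 g1 g1')
  have Pc: "shortlist_R 1 2 (\<lambda>_. 1) 1 (PsA(1:={3})) = {2}"
  proof (rule shortlist_eq)
    show "finite (\<Union>j\<in>{1..2}. (PsA(1:={3})) j)" unfolding U1 by simp
    show "{2} \<subseteq> (\<Union>j\<in>{1..2}. (PsA(1:={3})) j)" unfolding U1 by simp
    show "sum (\<lambda>_. 1::nat) {2} \<le> 1 * 1" by simp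
    fix Y assume Y: "Y \<subseteq> (\<Union>j\<in>{1..2}. (PsA(1:={3})) j)" "sum (\<lambda>_. 1::nat) Y \<le> 1 * 1"
    have "Y = {} \<or> Y = {2} \<or> Y = {3}" using fin_smallA Y unfolding U1 by blast
    thus "eqrep_score 2 (PsA(1:={3})) Y \<le> eqrep_score 2 (PsA(1:={3})) {2}" using sc by auto
    show "eqrep_score 2 (PsA(1:={3})) Y = eqrep_score 2 (PsA(1:={3})) {2} \<Longrightarrow> Y \<noteq> {2} \<Longrightarrow>
          Min (({2} - Y) \<union> (Y - {2})) \<in> {2}"
      using \<open>Y = {} \<or> Y = {2} \<or> Y = {3}\<close> sc by auto
  qed
  have Pc': "shortlist_R 1 2 (\<lambda>_. 1) 1 ((PsA(1:={3}))(1:={1})) = {1}"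
    unfolding fun_upd_upd
  proof (rule shortlist_eq)
    show "finite (\<Union>j\<in>{1..2}. (PsA(1:={1})) j)" unfolding U2 by simp
    show "{1} \<subseteq> (\<Union>j\<in>{1..2}. (PsA(1:={1})) j)" unfolding U2 by simp
    show "sum (\<lambda>_. 1::nat) {1} \<le> 1 * 1" by simp
    fix Y assume Y: "Y \<subseteq> (\<Union>j\<in>{1..2}. (PsA(1:={1})) j)" "sum (\<lambda>_. 1::nat) Y \<le> 1 * 1"
    have "Y = {} \<or> Y = {1} \<or> Y = {2}" using fin_smallA Y unfolding U2 by blast
    thus "eqrep_score 2 (PsA(1:={1})) Y \<le> eqrep_score 2 (PsA(1:={1})) {1}" using sc' by auto
    show "eqrep_score 2 (PsA(1:={1})) Y = eqrep_score 2 (PsA(1:={1})) {1} \<Longrightarrow> Y \<noteq> {1} \<Longrightarrow>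
          Min (({1} - Y) \<union> (Y - {1})) \<in> {1}"
      using \<open>Y = {} \<or> Y = {1} \<or> Y = {2}\<close> sc' by auto
  qed
  have Q: "top (\<lambda>_. 1) 1 prefA 1 ({2} \<union> {1}) = {1}"
    by (simp add: top_def greed_def prefA_def)
  have S1: "Fstar M F 2 (\<lambda>_. 1) 1 prefA 1 {1} (\<lambda>j. top (\<lambda>_. 1) 1 prefA j {1}) = {1}"
  proof (rule Fstar_const)
    show "\<forall>A'. A' \<subseteq> {1} \<longrightarrow> F 2 (\<lambda>_. 1) 1 {1} ((\<lambda>j. top (\<lambda>_. 1) 1 prefA j {1})(1 := A')) = {1}"
      using F_single[OF F, of "\<lambda>_. 1" 1 1] by simp
  qed auto
  have S2: "Fstar M F 2 (\<lambda>_. 1) 1 prefA 1 {2} (\<lambda>j. top (\<lambda>_. 1) 1 prefA j {2}) = {2}"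
  proof (rule Fstar_const)
    show "\<forall>A'. A' \<subseteq> {2} \<longrightarrow> F 2 (\<lambda>_. 1) 1 {2} ((\<lambda>j. top (\<lambda>_. 1) 1 prefA j {2})(1 := A')) = {2}"
      using F_single[OF F, of "\<lambda>_. 1" 2 1] by simp
  qed auto
  have sp: "spref M (\<lambda>_. 1) {1} {1} {2}" by (subst spref_single) auto
  show ?thesis
    unfolding successful_antic_def Let_def Pc Pc' Q S1 S2 by (rule sp)
qed

theorem fact2:
  fixes M :: pmodel and k :: nat and F :: alloc_rule
  assumes "1 \<le> k"
    and "F \<in> {greedy_approval, approval_max}"
  shows "\<not> U_FSSP_A M k F"
proof
  assume U: "U_FSSP_A M k F"
  show False
  proof (cases "k = 1")
    case True
    note H = U[unfolded U_FSSP_A_def, THEN spec[of _ 3], THEN spec[of _ 2], THEN spec[of _ "\<lambda>_. 1"],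
       THEN spec[of _ 1], THEN spec[of _ prefA], THEN spec[of _ CA], THEN spec[of _ PsA], THEN spec[of _ 1]]
    have uni: "(\<Union>j\<in>{1..2}. PsA j) = {2}" unfolding int12 by (auto simp: PsA_def)
    have e: "top (\<lambda>_. 1) 1 prefA 1 (CA 1 \<union> (\<Union>j\<in>{1..2}. PsA j)) = {3}"
      unfolding uni by (simp add: top_def greed_def prefA_def CA_def)
    show False
      apply (rule impE[OF H])
       subgoal unfolding int12 int13 by (auto simp add: prefA_def CA_def PsA_def)
      apply (erule notE)
      apply (rule exI[of _ "{1}"])
      apply (rule conjI)
       apply (simp add: CA_def)
      apply (unfold int12[symmetric] e True)
      apply (rule instA[OF assms(2)])
      done
  next
    case False
    hence k: "k \<ge> 2" using assms(1) by simp
    note H = U[unfolded U_FSSP_A_def, THEN spec[of _ 3], THEN spec[of _ 3], THEN spec[of _ "\<lambda>_. 2"],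
       THEN spec[of _ 3], THEN spec[of _ prefB], THEN spec[of _ CB], THEN spec[of _ PsB], THEN spec[of _ 1]]
    have uni: "(\<Union>j\<in>{1..3}. PsB j) = {2}" unfolding int13 by (auto simp: PsB_def)
    have e: "top (\<lambda>_. 2) 3 prefB 1 (CB 1 \<union> (\<Union>j\<in>{1..3}. PsB j)) = {1}"
      unfolding uni by (simp add: top_def greed_def prefB_def CB_def)
    show False
      apply (rule impE[OF H])
       subgoal unfolding int13 by (auto simp add: prefB_def CB_def PsB_def)
      apply (erule notE)
      apply (rule exI[of _ "{1,3}"])
      apply (rule conjI)
       apply (simp add: CB_def)
      apply (unfold int13[symmetric] e)
      apply (rule instB[OF k assms(2)])
      done
  qed
qed

end
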